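(* In the 1SDI setting where Alice measures $A_0=\sigma_x$, $A_1=\sigma_y$, Bob measures $B_0=\sigma_x$, $B_1=\sigma_y$, and Charlie is a black box, the Mermin family $P^V_{MF}$ ($0<V\le1$) demonstrates tripartite steering if and only if $V>\frac1{\sqrt2}$.
   Context: Outcomes and settings: $a,b,c,x,y,z\in\{0,1\}$. For a qubit observable $O$ with eigenvalues $\pm1$, the measurement has projectors $M_0=(\mathbb 1+O)/2$, $M_1=(\mathbb 1-O)/2$; $M^A_{a|x}$, $M^B_{b|y}$ denote the projectors of $A_x$, $B_y$. Mermin family: $P^V_{MF}(abc|xyz)=\frac{1+(-1)^{a\oplus b\oplus c\oplus xy\oplus yz\oplus xz}\,\delta_{x\oplus y\oplus1,z}\,V}{8}$. 1SDI fully LHS-LHV model: $P(abc|xyz)=\sum_\lambda q_\lambda \mathrm{Tr}(M^A_{a|x}\rho^\lambda_A)\mathrm{Tr}(M^B_{b|y}\rho^\lambda_B)P_\lambda(c|z)$ with probabilities $q_\lambda$, qubit states $\rho^\lambda_A,\rho^\lambda_B$ and arbitrary conditional distributions $P_\lambda(c|z)$. Tripartite steering in the 1SDI scenario: $P$ demonstrates tripartite steering iff (i) it admits no 1SDI fully LHS-LHV model, and (ii) there is no finite $d$, state $\rho^{ABC}=\sum_\lambda r_\lambda\rho^\lambda_{AB}\otimes\rho^\lambda_C$ on $\mathbb C^2\otimes\mathbb C^2\otimes\mathbb C^d$ (separable across $AB|C$) and POVMs $\{N_{c|z}\}_c$ on $\mathbb C^d$ with $P(abc|xyz)=\mathrm{Tr}[(M^A_{a|x}\otimes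 M^B_{b|y}\otimes N_{c|z})\rho^{ABC}]$. *)

theory Defs
  imports Complex_Main "Jordan_Normal_Form.Matrix"
begin

definition mtrace :: "complex mat \<Rightarrow> complex" where
  "mtrace A = (\<Sum>i<dim_row A. A $$ (i, i))"

text \<open>Positive semidefinite n x n complex matrix: v^* A v is real and nonnegative
  for every v in C^n (this also forces A to be Hermitian).\<close>
definition psd :: "nat \<Rightarrow> complex mat \<Rightarrow> bool" where
  "psd n A \<longleftrightarrow> A \<in> carrier_mat n n \<and>
     (\<forall>v \<in> carrier_vec n. Im (conjugate v \<bullet> (A *\<^sub>v v)) = 0 \<and>
                           Re (conjugate v \<bullet> (A *\<^sub>v v)) \<ge> 0)"

definition density :: "nat \<Rightarrow> complex mat \<Rightarrow> bool" where
  "density n \<rho> \<longleftrightarrow> psd n \<rho> \<and> mtrace \<rho> = 1"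

definition kron :: "complex mat \<Rightarrow> complex mat \<Rightarrow> complex mat" where
  "kron A B = mat (dim_row A * dim_row B) (dim_col A * dim_col B)
     (\<lambda>(i, j). A $$ (i div dim_row B, j div dim_col B) * B $$ (i mod dim_row B, j mod dim_col B))"

definition msum :: "nat \<Rightarrow> nat \<Rightarrow> (nat \<Rightarrow> complex mat) \<Rightarrow> complex mat" where
  "msum n k f = mat k k (\<lambda>(i, j). \<Sum>l<n. f l $$ (i, j))"

definition sigma_x :: "complex mat" where
  "sigma_x = mat_of_rows_list 2 [[0, 1], [1, 0]]"

definition sigma_y :: "complex mat" where
  "sigma_y = mat_of_rows_list 2 [[0, - \<i>], [\<i>, 0]]"

definition proj :: "complex mat \<Rightarrow> nat \<Rightarrow> complex mat" where
  "proj Obs a = (1/2 :: complex) \<cdot>\<^sub>m (1\<^sub>m 2 + ((-1) ^ a) \<cdot>\<^sub>m Obs)"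

definition obs :: "nat \<Rightarrow> complex mat" where
  "obs x = (if x = 0 then sigma_x else sigma_y)"

definition MA :: "nat \<Rightarrow> nat \<Rightarrow> complex mat" where
  "MA a x = proj (obs x) a"

definition MB :: "nat \<Rightarrow> nat \<Rightarrow> complex mat" where
  "MB b y = proj (obs y) b"

definition mermin :: "real \<Rightarrow> nat \<Rightarrow> nat \<Rightarrow> nat \<Rightarrow> nat \<Rightarrow> nat \<Rightarrow> nat \<Rightarrow> real" where
  "mermin V a b c x y z =
     (1 + (-1) ^ ((a + b + c + x*y + y*z + x*z) mod 2)
          * (if (x + y + 1) mod 2 = z then 1 else 0) * V) / 8"

text \<open>A behaviour P a b c x y z (outcomes and settings in {0,1}).\<close>
type_synonym behaviour = "nat \<Rightarrow> nat \<Rightarrow> nat \<Rightarrow> nat \<Rightarrow> nat \<Rightarrow> nat \<Rightarrow> real"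

abbreviation bit :: "nat set" where "bit \<equiv> {0, 1}"

definition fully_LHS_LHV :: "behaviour \<Rightarrow> bool" where
  "fully_LHS_LHV P \<longleftrightarrow>
    (\<exists>(n::nat) (q::nat \<Rightarrow> real) (\<rho>A::nat \<Rightarrow> complex mat) (\<rho>B::nat \<Rightarrow> complex mat)
        (Pc::nat \<Rightarrow> nat \<Rightarrow> nat \<Rightarrow> real).
       (\<forall>l<n. q l \<ge> 0) \<and> (\<Sum>l<n. q l) = 1 \<and>
       (\<forall>l<n. density 2 (\<rho>A l) \<and> density 2 (\<rho>B l)) \<and>
       (\<forall>l<n. \<forall>z\<in>bit. Pc l 0 z \<ge> 0 \<and> Pc l 1 z \<ge> 0 \<and> Pc l 0 z + Pc l 1 z = 1) \<and>
       (\<forall>a\<in>bit. \<forall>b\<in>bit. \<forall>c\<in>bit. \<forall>x\<in>bit. \<forall>y\<in>bit. \<forall>z\<in>bit.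
          complex_of_real (P a b c x y z) =
            (\<Sum>l<n. complex_of_real (q l) * mtrace (MA a x * \<rho>A l)
                     * mtrace (MB b y * \<rho>B l) * complex_of_real (Pc l c z))))"

definition AB_C_separable_model :: "behaviour \<Rightarrow> bool" where
  "AB_C_separable_model P \<longleftrightarrow>
    (\<exists>(d::nat) (n::nat) (r::nat \<Rightarrow> real) (\<rho>AB::nat \<Rightarrow> complex mat) (\<rho>C::nat \<Rightarrow> complex mat)
        (N::nat \<Rightarrow> nat \<Rightarrow> complex mat).
       (\<forall>l<n. r l \<ge> 0) \<and> (\<Sum>l<n. r l) = 1 \<and>
       (\<forall>l<n. density 4 (\<rho>AB l) \<and> density d (\<rho>C l)) \<and>
       (\<forall>z\<in>bit. psd d (N 0 z) \<and> psd d (N 1 z) \<and> N 0 z + N 1 z = 1\<^sub>m d) \<and>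
       (let \<rho> = msum n (4 * d) (\<lambda>l. complex_of_real (r l) \<cdot>\<^sub>m kron (\<rho>AB l) (\<rho>C l)) in
        \<forall>a\<in>bit. \<forall>b\<in>bit. \<forall>c\<in>bit. \<forall>x\<in>bit. \<forall>y\<in>bit. \<forall>z\<in>bit.
          complex_of_real (P a b c x y z) =
            mtrace (kron (kron (MA a x) (MB b y)) (N c z) * \<rho>)))"

definition tripartite_steering :: "behaviour \<Rightarrow> bool" where
  "tripartite_steering P \<longleftrightarrow> \<not> fully_LHS_LHV P \<and> \<not> AB_C_separable_model P"

end

theory Submission
  imports Defs
begin


lemma sum_mult_split:
  fixes f :: "nat \<Rightarrow> 'a::comm_monoid_add"
  shows "(\<Sum>i<m*d. f i) = (\<Sum>p<m. \<Sum>q<d. f (p*d+q))"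
proof (induction m)
  case 0 then show ?case by simp
next
  case (Suc m)
  have e: "{..<Suc m * d} = {..<m*d} \<union> {m*d..<m*d+d}" by auto
  have "(\<Sum>i<Suc m*d. f i) = (\<Sum>i<m*d. f i) + (\<Sum>i\<in>{m*d..<m*d+d}. f i)"
    unfolding e by (rule sum.union_disjoint) auto
  also have "(\<Sum>i\<in>{m*d..<m*d+d}. f i) = (\<Sum>q<d. f (m*d+q))"
    using sum.shift_bounds_nat_ivl[of f 0 "m*d" d] by (simp add: atLeast0LessThan add.commute)
  finally show ?case using Suc by simp
qed

lemma mtrace_mult:
  assumes "A \<in> carrier_mat n n" "B \<in> carrier_mat n n"
  shows "mtrace (A * B) = (\<Sum>i<n. \<Sum>j<n. A $$ (i,j) * B $$ (j,i))"
  using assms unfolding mtrace_def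
  by (auto simp: scalar_prod_def atLeast0LessThan intro!: sum.cong)

lemma kron_carrier:
  assumes "A \<in> carrier_mat m m" "B \<in> carrier_mat d d"
  shows "kron A B \<in> carrier_mat (m*d) (m*d)"
  using assms by (auto simp: kron_def)

lemma kron_index:
  assumes "A \<in> carrier_mat m m" "B \<in> carrier_mat d d" "i < m*d" "j < m*d"
  shows "kron A B $$ (i,j) = A $$ (i div d, j div d) * B $$ (i mod d, j mod d)"
  using assms by (auto simp: kron_def)

lemma trace_kron_msum:
  assumes K: "K \<in> carrier_mat m m" and N: "N \<in> carrier_mat d d"
  and R: "\<forall>l<n. R l \<in> carrier_mat m m" and C: "\<forall>l<n. C l \<in> carrier_mat d d"
  shows "mtrace (kron K N * msum n (m*d) (\<lambda>l. c l \<cdot>\<^sub>m kron (R l) (C l)))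
     = (\<Sum>l<n. c l * mtrace (K * R l) * mtrace (N * C l))"
proof -
  let ?M = "msum n (m*d) (\<lambda>l. c l \<cdot>\<^sub>m kron (R l) (C l))"
  have Mc: "?M \<in> carrier_mat (m*d) (m*d)" by (simp add: msum_def)
  have Mi: "?M $$ (j,i) = (\<Sum>l<n. c l * (R l $$ (j div d, i div d) * C l $$ (j mod d, i mod d)))"
    if "i < m*d" "j < m*d" for i j
  proof -
    have "?M $$ (j,i) = (\<Sum>l<n. (c l \<cdot>\<^sub>m kron (R l) (C l)) $$ (j,i))"
      using that by (simp add: msum_def)
    also have "\<dots> = (\<Sum>l<n. c l * (R l $$ (j div d, i div d) * C l $$ (j mod d, i mod d)))"
    proof (rule sum.cong[OF refl])
      fix l assume "l \<in> {..<n}"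
      then have "R l \<in> carrier_mat m m" "C l \<in> carrier_mat d d" using R C by auto
      then show "(c l \<cdot>\<^sub>m kron (R l) (C l)) $$ (j,i) = c l * (R l $$ (j div d, i div d) * C l $$ (j mod d, i mod d))"
        using that by (simp add: kron_def)
    qed
    finally show ?thesis .
  qed
  have dpos: "d > 0" if "p*d+q < m*d" "q < d" for p q using that by auto
  have "mtrace (kron K N * ?M) = (\<Sum>i<m*d. \<Sum>j<m*d. kron K N $$ (i,j) * ?M $$ (j,i))"
    by (rule mtrace_mult[OF kron_carrier[OF K N] Mc])
  also have "\<dots> = (\<Sum>i<m*d. \<Sum>j<m*d. K $$ (i div d, j div d) * N $$ (i mod d, j mod d) *
        (\<Sum>l<n. c l * (R l $$ (j div d, i div d) * C l $$ (j mod d, i mod d))))"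
    by (intro sum.cong refl, simp add: kron_index[OF K N] Mi)
  also have "\<dots> = (\<Sum>p<m. \<Sum>q<d. \<Sum>p'<m. \<Sum>q'<d. K $$ (p, p') * N $$ (q, q') *
        (\<Sum>l<n. c l * (R l $$ (p', p) * C l $$ (q', q))))"
    unfolding sum_mult_split
    by (intro sum.cong refl) (simp add: sum_mult_split)
  also have "\<dots> = (\<Sum>l<n. \<Sum>p<m. \<Sum>q<d. \<Sum>p'<m. \<Sum>q'<d. c l * (K $$ (p, p') * R l $$ (p', p)) *
        (N $$ (q, q') * C l $$ (q', q)))"
    by (simp add: sum_distrib_left sum.swap[of _ "{..<n}"] algebra_simps)
  also have "\<dots> = (\<Sum>l<n. c l * mtrace (K * R l) * mtrace (N * C l))"
  proof (rule sum.cong[OF refl])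
    fix l assume l: "l \<in> {..<n}"
    show "(\<Sum>p<m. \<Sum>q<d. \<Sum>p'<m. \<Sum>q'<d. c l * (K $$ (p, p') * R l $$ (p', p)) *
        (N $$ (q, q') * C l $$ (q', q))) = c l * mtrace (K * R l) * mtrace (N * C l)"
      using l R C
      by (simp add: mtrace_mult[OF K] mtrace_mult[OF N] sum_distrib_left sum_distrib_right
          sum.swap[of _ "{..<d}" "{..<m}"] algebra_simps)
  qed
  finally show ?thesis .
qed



definition Qf :: "nat \<Rightarrow> (nat \<Rightarrow> nat \<Rightarrow> complex) \<Rightarrow> (nat \<Rightarrow> complex) \<Rightarrow> complex" where
  "Qf n A v = (\<Sum>i<n. \<Sum>j<n. cnj (v i) * A i j * v j)"

definition psdf :: "nat \<Rightarrow> (nat \<Rightarrow> nat \<Rightarrow> complex) \<Rightarrow> bool" where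
  "psdf n A \<longleftrightarrow> (\<forall>v. Im (Qf n A v) = 0 \<and> Re (Qf n A v) \<ge> 0)"

definition Tr2 :: "nat \<Rightarrow> (nat \<Rightarrow> nat \<Rightarrow> complex) \<Rightarrow> (nat \<Rightarrow> nat \<Rightarrow> complex) \<Rightarrow> complex" where
  "Tr2 n A B = (\<Sum>i<n. \<Sum>j<n. A i j * B j i)"

lemma psd_psdf:
  assumes "psd n M" shows "psdf n (\<lambda>i j. M $$ (i,j))"
  unfolding psdf_def
proof
  fix v :: "nat \<Rightarrow> complex"
  have M: "M \<in> carrier_mat n n" using assms by (simp add: psd_def)
  have vc: "vec n v \<in> carrier_vec n" by simp
  have "conjugate (vec n v) \<bullet> (M *\<^sub>v vec n v) = Qf n (\<lambda>i j. M $$ (i,j)) v"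
    using M unfolding Qf_def
    by (auto simp: scalar_prod_def atLeast0LessThan sum_distrib_left mult.assoc intro!: sum.cong)
  then show "Im (Qf n (\<lambda>i j. M $$ (i,j)) v) = 0 \<and> 0 \<le> Re (Qf n (\<lambda>i j. M $$ (i,j)) v)"
    using assms vc unfolding psd_def by metis
qed

lemma psdf_psd:
  assumes "M \<in> carrier_mat n n" "psdf n (\<lambda>i j. M $$ (i,j))" shows "psd n M"
  unfolding psd_def
proof (rule conjI[OF assms(1)], intro ballI)
  fix w :: "complex vec" assume w: "w \<in> carrier_vec n"
  have "conjugate w \<bullet> (M *\<^sub>v w) = Qf n (\<lambda>i j. M $$ (i,j)) (\<lambda>i. w $ i)"
    using assms(1) w unfolding Qf_def
    by (auto simp: scalar_prod_def atLeast0LessThan sum_distrib_left mult.assoc intro!: sum.cong)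
  then show "Im (conjugate w \<bullet> (M *\<^sub>v w)) = 0 \<and> 0 \<le> Re (conjugate w \<bullet> (M *\<^sub>v w))"
    using assms(2) unfolding psdf_def by metis
qed

lemma if0_mult: "(if P then a else 0) * b = (if P then a * b else (0::complex))"
  "b * (if P then a else 0) = (if P then b * a else 0)"
  "cnj (if P then a else 0) = (if P then cnj a else 0)" by auto

lemma Qf_single:
  assumes "i < n" shows "Qf n A (\<lambda>k. if k = i then x else 0) = cnj x * A i i * x"
  using assms unfolding Qf_def by (simp add: if0_mult)

lemma Qf_two:
  assumes "i < n" "j < n" "i \<noteq> j"
  shows "Qf n A (\<lambda>k. if k = i then x else if k = j then y else 0) =
     cnj x * A i i * x + cnj x * A i j * y + cnj y * A j i * x + cnj y * A j j * y"
proof -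
  have v: "(\<lambda>k. if k = i then x else if k = j then y else 0) =
           (\<lambda>k. (if k = i then x else 0) + (if k = j then y else 0))" using assms(3) by auto
  show ?thesis using assms unfolding v Qf_def
    by (simp add: ring_distribs sum.distrib if0_mult)
qed

lemma psdf_diag:
  assumes "psdf n A" "i < n" shows "Im (A i i) = 0" "Re (A i i) \<ge> 0"
proof -
  have "Qf n A (\<lambda>k. if k = i then 1 else 0) = A i i" using Qf_single[OF assms(2)] by simp
  then show "Im (A i i) = 0" "Re (A i i) \<ge> 0" using assms(1) unfolding psdf_def by metis+
qed

lemma psdf_herm:
  assumes "psdf n A" "i < n" "j < n" shows "A j i = cnj (A i j)"
proof (cases "i = j")
  case True then show ?thesis using psdf_diag[OF assms(1,2)] by (simp add: complex_eq_iff)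
next
  case False
  have d1: "Im (A i i) = 0" "Im (A j j) = 0" using psdf_diag assms by auto
  have "Im (Qf n A (\<lambda>k. if k = i then 1 else if k = j then 1 else 0)) = 0"
    using assms(1) unfolding psdf_def by blast
  then have h1: "Im (A i j) + Im (A j i) = 0" using Qf_two[OF assms(2,3) False, of A 1 1] d1 by simp
  have "Im (Qf n A (\<lambda>k. if k = i then 1 else if k = j then \<i> else 0)) = 0"
    using assms(1) unfolding psdf_def by blast
  then have h2: "Re (A i j) - Re (A j i) = 0" using Qf_two[OF assms(2,3) False, of A 1 \<i>] d1 by simp
  show ?thesis using h1 h2 by (simp add: complex_eq_iff)
qed



lemma Qf_Suc: "Qf (Suc n) A v = Qf n A v + (\<Sum>i<n. cnj (v i) * A i n * v n)
   + (\<Sum>j<n. cnj (v n) * A n j * v j) + cnj (v n) * A n n * v n"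
  unfolding Qf_def by (simp add: sum.distrib add.assoc)

lemma Tr2_Suc: "Tr2 (Suc n) A B = Tr2 n A B + (\<Sum>i<n. A i n * B n i)
   + (\<Sum>j<n. A n j * B j n) + A n n * B n n"
  unfolding Tr2_def by (simp add: sum.distrib add.assoc)

lemma Qf_cong: "(\<And>i. i < n \<Longrightarrow> v i = w i) \<Longrightarrow> (\<And>i j. i < n \<Longrightarrow> j < n \<Longrightarrow> A i j = A' i j)
   \<Longrightarrow> Qf n A v = Qf n A' w"
  unfolding Qf_def by (intro sum.cong refl) auto

lemma psdf_restrict: assumes "psdf (Suc n) B" shows "psdf n B"
  unfolding psdf_def
proof
  fix v
  have "Qf n B (\<lambda>k. if k < n then v k else 0) = Qf n B v" by (rule Qf_cong) auto
  then have "Qf (Suc n) B (\<lambda>k. if k < n then v k else 0) = Qf n B v"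
    by (simp add: Qf_Suc)
  then show "Im (Qf n B v) = 0 \<and> 0 \<le> Re (Qf n B v)" using assms unfolding psdf_def by metis
qed

lemma trace_pos_step:
  assumes IH: "\<And>A B. psdf n A \<Longrightarrow> psdf n B \<Longrightarrow> Im (Tr2 n A B) = 0 \<and> Re (Tr2 n A B) \<ge> 0"
  and A: "psdf (Suc n) A" and B: "psdf (Suc n) B" and a: "A n n = of_real \<alpha>" "\<alpha> > 0"
  shows "Im (Tr2 (Suc n) A B) = 0 \<and> Re (Tr2 (Suc n) A B) \<ge> 0"
proof -
  define S where "S i j = A i j - A i n * A n j / of_real \<alpha>" for i j
  have an: "complex_of_real \<alpha> \<noteq> 0" using a by simp
  have herm: "A n i = cnj (A i n)" if "i < n" for i by (rule psdf_herm[OF A]) (use that in auto)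
  have Spsd: "psdf n S" unfolding psdf_def
  proof
    fix v
    define \<beta> where "\<beta> = (\<Sum>j<n. A n j * v j)"
    define \<beta>2 where "\<beta>2 = (\<Sum>i<n. cnj (v i) * A i n)"
    define t where "t = - \<beta> / of_real \<alpha>"
    define v' where "v' k = (if k < n then v k else t)" for k
    have q1: "Qf n A v' = Qf n A v" by (rule Qf_cong) (auto simp: v'_def)
    have q2: "(\<Sum>i<n. cnj (v' i) * A i n * v' n) = \<beta>2 * t"
      by (simp add: \<beta>2_def v'_def sum_distrib_right)
    have q3: "(\<Sum>j<n. cnj (v' n) * A n j * v' j) = cnj t * \<beta>"
      by (simp add: \<beta>_def v'_def sum_distrib_left mult.assoc)
    have q4: "Qf n S v = Qf n A v - \<beta>2 * \<beta> / of_real \<alpha>"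
    proof -
      have "Qf n S v = Qf n A v - (\<Sum>i<n. \<Sum>j<n. cnj (v i) * A i n * (A n j * v j) / of_real \<alpha>)"
        unfolding Qf_def S_def by (simp add: sum_subtractf[symmetric] algebra_simps)
      also have "(\<Sum>i<n. \<Sum>j<n. cnj (v i) * A i n * (A n j * v j) / of_real \<alpha>) = \<beta>2 * \<beta> / of_real \<alpha>"
        apply (simp add: \<beta>_def \<beta>2_def sum_distrib_left sum_distrib_right sum_divide_distrib)
        by (rule sum.swap)
      finally show ?thesis .
    qed
    have "Qf (Suc n) A v' = Qf n S v"
      unfolding Qf_Suc q1 q2 q3 q4 using an a(1)
      by (simp add: v'_def t_def field_simps)
    then show "Im (Qf n S v) = 0 \<and> 0 \<le> Re (Qf n S v)" using A[unfolded psdf_def, rule_format, of v'] by simp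
  qed
  have Bn: "psdf n B" by (rule psdf_restrict[OF B])
  from IH[OF Spsd Bn] have T: "Im (Tr2 n S B) = 0" "Re (Tr2 n S B) \<ge> 0" by auto
  define w where "w k = (if k < n then A k n else of_real \<alpha>)" for k
  have QB: "Im (Qf (Suc n) B w) = 0" "Re (Qf (Suc n) B w) \<ge> 0" using B[unfolded psdf_def, rule_format, of w] by auto
  have swap: "(\<Sum>i<n. \<Sum>j<n. A i n * A n j * B j i) = (\<Sum>i<n. \<Sum>j<n. A n i * B i j * A j n)"
    by (subst sum.swap) (simp add: algebra_simps)
  have e1: "Qf (Suc n) B w = (\<Sum>i<n. \<Sum>j<n. A n i * B i j * A j n)
     + of_real \<alpha> * (\<Sum>i<n. A n i * B i n) + of_real \<alpha> * (\<Sum>j<n. B n j * A j n)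
     + of_real \<alpha> * of_real \<alpha> * B n n"
  proof -
    have "Qf n B w = (\<Sum>i<n. \<Sum>j<n. A n i * B i j * A j n)"
      unfolding Qf_def w_def by (intro sum.cong refl) (simp add: herm)
    moreover have "(\<Sum>i<n. cnj (w i) * B i n * w n) = of_real \<alpha> * (\<Sum>i<n. A n i * B i n)"
      unfolding w_def by (simp add: sum_distrib_left herm algebra_simps)
    moreover have "(\<Sum>j<n. cnj (w n) * B n j * w j) = of_real \<alpha> * (\<Sum>j<n. B n j * A j n)"
      unfolding w_def by (simp add: sum_distrib_left algebra_simps)
    ultimately show ?thesis unfolding Qf_Suc by (simp add: w_def)
  qed
  have e2: "Tr2 n S B = Tr2 n A B - (\<Sum>i<n. \<Sum>j<n. A i n * A n j * B j i) / of_real \<alpha>"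
    unfolding Tr2_def S_def
    by (simp add: sum_subtractf[symmetric] sum_divide_distrib algebra_simps)
  have e3: "Tr2 (Suc n) A B = Tr2 n S B + Qf (Suc n) B w / of_real \<alpha>"
    unfolding Tr2_Suc e1 e2 swap using an a(1)
    by (simp add: field_simps)
  have "Qf (Suc n) B w / of_real \<alpha> = of_real (Re (Qf (Suc n) B w) / \<alpha>)"
    using QB(1) by (simp add: complex_eq_iff)
  then show ?thesis unfolding e3 using T QB a(2) by simp
qed

lemma Qf_shift: "Qf m (\<lambda>i j. A i j + (if i = j then c else 0)) v = Qf m A v + c * (\<Sum>i<m. cnj (v i) * v i)"
  unfolding Qf_def by (simp add: ring_distribs sum.distrib if0_mult sum_distrib_left mult.commute mult.left_commute)

lemma Tr2_shift: "Tr2 m (\<lambda>i j. A i j + (if i = j then c else 0)) B = Tr2 m A B + c * (\<Sum>i<m. B i i)"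
  unfolding Tr2_def by (simp add: ring_distribs sum.distrib if0_mult sum_distrib_left)

lemma sum_cnj_sq: "(\<Sum>i<m. cnj (v i) * v i) = of_real (\<Sum>i<m. (cmod (v i))^2)"
proof -
  have "cnj z * z = of_real ((cmod z)^2)" for z
    using complex_norm_square[of z, symmetric] by (simp only: mult.commute)
  then show ?thesis by (simp add: of_real_sum)
qed

lemma eps_arg:
  fixes x t :: real
  assumes t: "t \<ge> 0" and h: "\<And>\<epsilon>. \<epsilon> > 0 \<Longrightarrow> x \<ge> - \<epsilon> * t"
  shows "x \<ge> 0"
proof (rule ccontr)
  assume neg: "\<not> x \<ge> 0"
  have p: "- x / (t + 1) > 0" using neg t by (intro divide_pos_pos) auto
  have "x \<ge> - (- x / (t + 1)) * t" using h[OF p] .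
  then have "x \<ge> x * t / (t + 1)" by simp
  then have "x * t \<le> x * (t + 1)" using t by (simp add: pos_divide_le_eq)
  then show False using neg by (simp add: algebra_simps)
qed

lemma trace_pos:
  "psdf n A \<Longrightarrow> psdf n B \<Longrightarrow> Im (Tr2 n A B) = 0 \<and> Re (Tr2 n A B) \<ge> 0"
proof (induction n arbitrary: A B)
  case 0 then show ?case by (simp add: Tr2_def)
next
  case (Suc n)
  have diagB: "Im (\<Sum>i<Suc n. B i i) = 0" "Re (\<Sum>i<Suc n. B i i) \<ge> 0"
    using psdf_diag[OF Suc.prems(2)] unfolding Im_sum Re_sum
    by (auto intro!: sum_nonneg sum.neutral simp del: sum.lessThan_Suc)
  have An: "Im (A n n) = 0" "Re (A n n) \<ge> 0" using psdf_diag[OF Suc.prems(1)] by auto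
  have key: "Im (Tr2 (Suc n) A B + of_real \<epsilon> * (\<Sum>i<Suc n. B i i)) = 0 \<and>
             Re (Tr2 (Suc n) A B + of_real \<epsilon> * (\<Sum>i<Suc n. B i i)) \<ge> 0" if e: "\<epsilon> > 0" for \<epsilon>
  proof -
    define A' where "A' = (\<lambda>i j. A i j + (if i = j then complex_of_real \<epsilon> else 0))"
    have "psdf (Suc n) A'" unfolding psdf_def
    proof
      fix v
      have q: "Qf (Suc n) A' v = Qf (Suc n) A v + of_real (\<epsilon> * (\<Sum>i<Suc n. (cmod (v i))^2))"
        unfolding A'_def Qf_shift sum_cnj_sq by simp
      have "Im (Qf (Suc n) A v) = 0" "Re (Qf (Suc n) A v) \<ge> 0"
        using Suc.prems(1) unfolding psdf_def by blast+
      moreover have "\<epsilon> * (\<Sum>i<Suc n. (cmod (v i))^2) \<ge> 0"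
        using e by (intro mult_nonneg_nonneg sum_nonneg) auto
      ultimately show "Im (Qf (Suc n) A' v) = 0 \<and> 0 \<le> Re (Qf (Suc n) A' v)"
        unfolding q by simp
    qed
    moreover have "A' n n = of_real (Re (A n n) + \<epsilon>)" using An by (simp add: A'_def complex_eq_iff)
    moreover have "Tr2 (Suc n) A' B = Tr2 (Suc n) A B + of_real \<epsilon> * (\<Sum>i<Suc n. B i i)"
      unfolding A'_def Tr2_shift ..
    moreover have "Re (A n n) + \<epsilon> > 0" using An e by simp
    ultimately show ?thesis
      using trace_pos_step[OF Suc.IH _ Suc.prems(2), of A' "Re (A n n) + \<epsilon>"] by metis
  qed
  from key[of 1] diagB have im: "Im (Tr2 (Suc n) A B) = 0" by simp
  have "Re (Tr2 (Suc n) A B) \<ge> - \<epsilon> * Re (\<Sum>i<Suc n. B i i)" if "\<epsilon> > 0" for \<epsilon>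
    using key[OF that] diagB by simp
  then have "Re (Tr2 (Suc n) A B) \<ge> 0" using eps_arg diagB(2) by blast
  with im show ?case by simp
qed



lemma sum2: "(\<Sum>i<2. f i) = f 0 + f (1::nat)" by (simp add: numeral_eq_Suc)
lemma sum4: "(\<Sum>i<4. f i) = f 0 + f 1 + f 2 + f (3::nat)" by (simp add: numeral_eq_Suc)

definition oent :: "nat \<Rightarrow> nat \<Rightarrow> nat \<Rightarrow> complex" where
  "oent x i j = (if i = j then 0 else if x = 0 then 1 else if i = 0 then - \<i> else \<i>)"

lemma sx_carrier: "sigma_x \<in> carrier_mat 2 2"
  unfolding sigma_x_def mat_of_rows_list_def carrier_mat_def by simp
lemma sy_carrier: "sigma_y \<in> carrier_mat 2 2"
  unfolding sigma_y_def mat_of_rows_list_def carrier_mat_def by simp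
lemma obs_carrier: "obs x \<in> carrier_mat 2 2"
  unfolding obs_def using sx_carrier sy_carrier by simp

lemma sx_ent: assumes "i < 2" "j < 2" shows "sigma_x $$ (i,j) = oent 0 i j"
proof -
  have "i = 0 \<or> i = 1" "j = 0 \<or> j = 1" using assms by auto
  then show ?thesis unfolding sigma_x_def mat_of_rows_list_def oent_def by auto
qed
lemma sy_ent: assumes "i < 2" "j < 2" shows "sigma_y $$ (i,j) = oent 1 i j"
proof -
  have "i = 0 \<or> i = 1" "j = 0 \<or> j = 1" using assms by auto
  then show ?thesis unfolding sigma_y_def mat_of_rows_list_def oent_def by auto
qed
lemma obs_ent: "i < 2 \<Longrightarrow> j < 2 \<Longrightarrow> obs x $$ (i,j) = oent x i j"
  unfolding obs_def using sx_ent sy_ent by (simp add: oent_def)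

lemma proj_carrier: "proj (obs x) a \<in> carrier_mat 2 2"
  using obs_carrier by (simp add: proj_def)

lemma proj_ent: "i < 2 \<Longrightarrow> j < 2 \<Longrightarrow> proj (obs x) a $$ (i,j) =
   ((if i = j then 1 else 0) + (-1)^a * oent x i j) / 2"
  using carrier_matD[OF obs_carrier[of x]] by (simp add: proj_def obs_ent)

lemma MA_carrier: "MA a x \<in> carrier_mat 2 2" and MB_carrier: "MB a x \<in> carrier_mat 2 2"
  by (simp_all add: MA_def MB_def proj_carrier)

lemma MA_ent: "i < 2 \<Longrightarrow> j < 2 \<Longrightarrow> MA a x $$ (i,j) = ((if i = j then 1 else 0) + (-1)^a * oent x i j) / 2"
  and MB_ent: "i < 2 \<Longrightarrow> j < 2 \<Longrightarrow> MB a x $$ (i,j) = ((if i = j then 1 else 0) + (-1)^a * oent x i j) / 2"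
  by (simp_all add: MA_def MB_def proj_ent)

definition alpha :: "complex mat \<Rightarrow> nat \<Rightarrow> nat \<Rightarrow> nat \<Rightarrow> nat \<Rightarrow> complex" where
  "alpha R a b x y = mtrace (kron (MA a x) (MB b y) * R)"

lemma alpha_formula: assumes "R \<in> carrier_mat 4 4"
  shows "alpha R a b x y = (\<Sum>i<4. \<Sum>j<4.
     ((if i div 2 = j div 2 then 1 else 0) + (-1)^a * oent x (i div 2) (j div 2)) / 2 *
     (((if i mod 2 = j mod 2 then 1 else 0) + (-1)^b * oent y (i mod 2) (j mod 2)) / 2) * R $$ (j,i))"
proof -
  have K: "kron (MA a x) (MB b y) \<in> carrier_mat 4 4"
    using kron_carrier[OF MA_carrier MB_carrier] by simp
  show ?thesis unfolding alpha_def mtrace_mult[OF K assms]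
  proof (intro sum.cong refl)
    fix i j assume "i \<in> {..<4::nat}" "j \<in> {..<4::nat}"
    then have h: "i < 2*2" "j < 2*2" by auto
    have d: "i div 2 < 2" "j div 2 < 2" "i mod 2 < 2" "j mod 2 < 2" using h by auto
    show "kron (MA a x) (MB b y) $$ (i, j) * R $$ (j, i) =
     ((if i div 2 = j div 2 then 1 else 0) + (-1)^a * oent x (i div 2) (j div 2)) / 2 *
     (((if i mod 2 = j mod 2 then 1 else 0) + (-1)^b * oent y (i mod 2) (j mod 2)) / 2) * R $$ (j,i)"
      by (simp only: kron_index[OF MA_carrier MB_carrier h] MA_ent[OF d(1,2)] MB_ent[OF d(3,4)])
  qed
qed

definition t3 :: "complex mat \<Rightarrow> nat \<Rightarrow> nat \<Rightarrow> complex" where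
  "t3 R x y = (\<Sum>i<4. \<Sum>j<4. oent x (i div 2) (j div 2) * oent y (i mod 2) (j mod 2) * R $$ (j,i))"

lemma ring4: "(d1 + o1) / 2 * ((d2 + o2) / 2) * r - (d1 + o1) / 2 * ((d2 - o2) / 2) * r
   - (d1 - o1) / 2 * ((d2 + o2) / 2) * r + (d1 - o1) / 2 * ((d2 - o2) / 2) * r = o1 * o2 * (r::complex)"
  by (simp add: field_simps)

lemma F_t3: assumes "R \<in> carrier_mat 4 4"
  shows "alpha R 0 0 x y - alpha R 0 1 x y - alpha R 1 0 x y + alpha R 1 1 x y = t3 R x y"
proof -
  define d where "d i j = (if i = j then 1 else (0::complex))" for i j :: nat
  define f where "f a b = (\<Sum>i<4. \<Sum>j<4. ((d (i div 2) (j div 2)) + (-1)^a * oent x (i div 2) (j div 2)) / 2 *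
     (((d (i mod 2) (j mod 2)) + (-1)^b * oent y (i mod 2) (j mod 2)) / 2) * R $$ (j,i))" for a b :: nat
  have fa: "alpha R a b x y = f a b" for a b unfolding alpha_formula[OF assms] f_def d_def ..
  have "f 0 0 - f 0 1 - f 1 0 + f 1 1 = (\<Sum>i<4. \<Sum>j<4. oent x (i div 2) (j div 2) * oent y (i mod 2) (j mod 2) * R $$ (j,i))"
    unfolding f_def
    apply (simp only: sum_subtractf[symmetric] sum.distrib[symmetric])
    apply (intro sum.cong refl)
    apply (simp only: power_0 power_one_right mult_1 mult_minus1 diff_conv_add_uminus[symmetric] ring4)
    done
  then show ?thesis unfolding fa t3_def .
qed

lemma t3_00: "t3 R 0 0 = R $$ (3,0) + R $$ (2,1) + R $$ (1,2) + R $$ (0,3)"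
  and t3_11: "t3 R 1 1 = - R $$ (3,0) + R $$ (2,1) + R $$ (1,2) - R $$ (0,3)"
  and t3_01: "t3 R 0 1 = - \<i> * R $$ (3,0) + \<i> * R $$ (2,1) - \<i> * R $$ (1,2) + \<i> * R $$ (0,3)"
  and t3_10: "t3 R 1 0 = - \<i> * R $$ (3,0) - \<i> * R $$ (2,1) + \<i> * R $$ (1,2) + \<i> * R $$ (0,3)"
  by (simp_all add: t3_def sum4 oent_def)

definition betaA :: "complex mat \<Rightarrow> nat \<Rightarrow> nat \<Rightarrow> complex" where
  "betaA \<rho> a x = mtrace (MA a x * \<rho>)"
definition betaB :: "complex mat \<Rightarrow> nat \<Rightarrow> nat \<Rightarrow> complex" where
  "betaB \<rho> a x = mtrace (MB a x * \<rho>)"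

lemma betaA0: "\<rho> \<in> carrier_mat 2 2 \<Longrightarrow> betaA \<rho> 0 0 - betaA \<rho> 1 0 = \<rho> $$ (0,1) + \<rho> $$ (1,0)"
  and betaA1: "\<rho> \<in> carrier_mat 2 2 \<Longrightarrow> betaA \<rho> 0 1 - betaA \<rho> 1 1 = \<i> * (\<rho> $$ (0,1) - \<rho> $$ (1,0))"
  and betaB0: "\<rho> \<in> carrier_mat 2 2 \<Longrightarrow> betaB \<rho> 0 0 - betaB \<rho> 1 0 = \<rho> $$ (0,1) + \<rho> $$ (1,0)"
  and betaB1: "\<rho> \<in> carrier_mat 2 2 \<Longrightarrow> betaB \<rho> 0 1 - betaB \<rho> 1 1 = \<i> * (\<rho> $$ (0,1) - \<rho> $$ (1,0))"
  by (simp_all add: betaA_def betaB_def mtrace_mult[OF MA_carrier] mtrace_mult[OF MB_carrier]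
     MA_ent MB_ent sum2 oent_def algebra_simps)



lemma Re_ofr: "Re (complex_of_real r * z) = r * Re z" by simp

lemma cross_bound:
  assumes R: "psdf n R" and ij: "i < n" "j < n" "i \<noteq> j"
  shows "Re (w * R i j + cnj w * R j i) \<le> cmod w * (Re (R i i) + Re (R j j))"
proof (cases "w = 0")
  case True then show ?thesis using psdf_diag[OF R ij(1)] psdf_diag[OF R ij(2)] by simp
next
  case False
  let ?c = "complex_of_real (cmod w)"
  have ww: "cnj w * w = complex_of_real ((cmod w)^2)"
    using complex_norm_square[of w] by (simp add: mult.commute)
  have "Qf n R (\<lambda>k. if k = i then ?c else if k = j then - w else 0) =
     ?c * R i i * ?c + ?c * R i j * (- w) + cnj (- w) * R j i * ?c + cnj (- w) * R j j * (- w)"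
    using Qf_two[OF ij] by simp
  also have "\<dots> = complex_of_real ((cmod w)^2) * R i i + (cnj w * w) * R j j - ?c * (w * R i j + cnj w * R j i)"
    by (simp add: algebra_simps power2_eq_square)
  finally have q: "Qf n R (\<lambda>k. if k = i then ?c else if k = j then - w else 0) =
     complex_of_real ((cmod w)^2) * (R i i + R j j) - ?c * (w * R i j + cnj w * R j i)"
    unfolding ww by (simp add: algebra_simps)
  have "Re (Qf n R (\<lambda>k. if k = i then ?c else if k = j then - w else 0)) \<ge> 0"
    using R unfolding psdf_def by blast
  then have "0 \<le> (cmod w)^2 * (Re (R i i) + Re (R j j)) - cmod w * Re (w * R i j + cnj w * R j i)"
    unfolding q by simp
  then have "0 \<le> cmod w * (cmod w * (Re (R i i) + Re (R j j)) - Re (w * R i j + cnj w * R j i))"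
    by (simp add: algebra_simps power2_eq_square)
  moreover have "cmod w > 0" using False by simp
  ultimately show ?thesis by (simp add: zero_le_mult_iff)
qed

lemma cmod_w_le:
  fixes g0 g1 :: real assumes "\<bar>g0\<bar> \<le> 1" "\<bar>g1\<bar> \<le> 1"
  shows "cmod (complex_of_real g1 + \<i> * complex_of_real g0) \<le> sqrt 2"
proof -
  have "cmod (complex_of_real g1 + \<i> * complex_of_real g0) = sqrt (g1^2 + g0^2)"
    by (simp add: cmod_def)
  moreover have "g1^2 \<le> 1" "g0^2 \<le> 1" using assms by (simp_all add: abs_square_le_1)
  ultimately show ?thesis by simp
qed

lemma bound4:
  fixes g0 g1 :: real
  assumes R: "psdf 4 R" and tr: "Re (R 0 0) + Re (R 1 1) + Re (R 2 2) + Re (R 3 3) = 1"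
    and g: "\<bar>g0\<bar> \<le> 1" "\<bar>g1\<bar> \<le> 1"
  shows "Re (complex_of_real g1 * (2 * (R 0 3 + R 3 0)) + complex_of_real g0 * (2 * \<i> * (R 0 3 - R 3 0)))
         \<le> 2 * sqrt 2"
proof -
  define w where "w = complex_of_real g1 + \<i> * complex_of_real g0"
  have cw: "cnj w = complex_of_real g1 - \<i> * complex_of_real g0" by (simp add: w_def)
  have e: "complex_of_real g1 * (2 * (R 0 3 + R 3 0)) + complex_of_real g0 * (2 * \<i> * (R 0 3 - R 3 0))
       = 2 * (w * R 0 3 + cnj w * R 3 0)" unfolding cw by (simp add: w_def algebra_simps)
  have cb: "Re (w * R 0 3 + cnj w * R 3 0) \<le> cmod w * (Re (R 0 0) + Re (R 3 3))"
    using cross_bound[OF R, of 0 3 w] by simp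
  have d: "Re (R 1 1) \<ge> 0" "Re (R 2 2) \<ge> 0" using psdf_diag[OF R, of 1] psdf_diag[OF R, of 2] by auto
  have "cmod w * (Re (R 0 0) + Re (R 3 3)) \<le> cmod w * 1"
    using d tr by (intro mult_left_mono) auto
  moreover have "cmod w \<le> sqrt 2" unfolding w_def using cmod_w_le[OF g] .
  ultimately show ?thesis unfolding e using cb by simp
qed

lemma offdiag_half:
  assumes R: "psdf 2 R" and tr: "Re (R 0 0) + Re (R 1 1) = 1"
  shows "cmod (R 0 1) \<le> 1/2"
proof (cases "R 0 1 = 0")
  case True then show ?thesis by simp
next
  case False
  have h: "R 1 0 = cnj (R 0 1)" using psdf_herm[OF R, of 0 1] by simp
  have c: "Re (cnj (R 0 1) * R 0 1 + cnj (cnj (R 0 1)) * R 1 0) \<le> cmod (R 0 1)"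
    using cross_bound[OF R, of 0 1 "cnj (R 0 1)"] tr by simp
  have "Re (cnj (R 0 1) * R 0 1 + cnj (cnj (R 0 1)) * R 1 0) = 2 * ((Re (R 0 1))^2 + (Im (R 0 1))^2)"
    unfolding h by (simp add: power2_eq_square)
  also have "\<dots> = 2 * (cmod (R 0 1))^2" by (simp add: cmod_power2)
  finally have "Re (cnj (R 0 1) * R 0 1 + cnj (cnj (R 0 1)) * R 1 0) = 2 * (cmod (R 0 1))^2" .
  with c have "2 * (cmod (R 0 1))^2 \<le> cmod (R 0 1)" by simp
  moreover have "cmod (R 0 1) > 0" using False by simp
  ultimately show ?thesis by (simp add: power2_eq_square)
qed

lemma bound2:
  fixes g0 g1 :: real
  assumes R: "psdf 2 R" "Re (R 0 0) + Re (R 1 1) = 1"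
    and S: "psdf 2 S" "Re (S 0 0) + Re (S 1 1) = 1"
    and g: "\<bar>g0\<bar> \<le> 1" "\<bar>g1\<bar> \<le> 1"
  shows "Re (complex_of_real g1 * ((R 0 1 + R 1 0) * (S 0 1 + S 1 0) - (\<i> * (R 0 1 - R 1 0)) * (\<i> * (S 0 1 - S 1 0)))
     + complex_of_real g0 * ((R 0 1 + R 1 0) * (\<i> * (S 0 1 - S 1 0)) + (\<i> * (R 0 1 - R 1 0)) * (S 0 1 + S 1 0)))
         \<le> 2 * sqrt 2"
proof -
  define w where "w = complex_of_real g1 + \<i> * complex_of_real g0"
  define u where "u = w * R 0 1 * S 0 1"
  have hR: "R 1 0 = cnj (R 0 1)" using psdf_herm[OF R(1), of 0 1] by simp
  have hS: "S 1 0 = cnj (S 0 1)" using psdf_herm[OF S(1), of 0 1] by simp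
  have cw: "cnj w = complex_of_real g1 - \<i> * complex_of_real g0" by (simp add: w_def)
  have e: "complex_of_real g1 * ((R 0 1 + R 1 0) * (S 0 1 + S 1 0) - (\<i> * (R 0 1 - R 1 0)) * (\<i> * (S 0 1 - S 1 0)))
     + complex_of_real g0 * ((R 0 1 + R 1 0) * (\<i> * (S 0 1 - S 1 0)) + (\<i> * (R 0 1 - R 1 0)) * (S 0 1 + S 1 0))
     = 2 * (u + cnj u)"
    unfolding u_def complex_cnj_mult cw hR hS by (simp add: w_def algebra_simps)
  have "Re (2 * (u + cnj u)) = 4 * Re u" by simp
  also have "\<dots> \<le> 4 * cmod u" using complex_Re_le_cmod[of u] by simp
  also have "cmod u = cmod w * cmod (R 0 1) * cmod (S 0 1)" by (simp add: u_def norm_mult)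
  also have "4 * (cmod w * cmod (R 0 1) * cmod (S 0 1)) \<le> 4 * (sqrt 2 * (1/2) * (1/2))"
    using cmod_w_le[OF g] offdiag_half[OF R] offdiag_half[OF S]
    by (intro mult_left_mono mult_mono) (auto simp: w_def)
  finally have "Re (2 * (u + cnj u)) \<le> sqrt 2" by simp
  then show ?thesis unfolding e using real_sqrt_ge_zero[of 2] by linarith
qed



definition Fc :: "(nat \<Rightarrow> nat \<Rightarrow> nat \<Rightarrow> nat \<Rightarrow> nat \<Rightarrow> complex) \<Rightarrow> nat \<Rightarrow> nat \<Rightarrow> nat \<Rightarrow> complex" where
  "Fc \<alpha> l x y = \<alpha> l 0 0 x y - \<alpha> l 0 1 x y - \<alpha> l 1 0 x y + \<alpha> l 1 1 x y"

definition Mx :: "behaviour \<Rightarrow> nat \<Rightarrow> nat \<Rightarrow> nat \<Rightarrow> real" where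
  "Mx P x y z = P 0 0 0 x y z - P 0 0 1 x y z - P 0 1 0 x y z + P 0 1 1 x y z
     - P 1 0 0 x y z + P 1 0 1 x y z + P 1 1 0 x y z - P 1 1 1 x y z"

definition Mexpr :: "behaviour \<Rightarrow> real" where
  "Mexpr P = Mx P 0 0 1 + Mx P 0 1 0 + Mx P 1 0 0 - Mx P 1 1 1"

lemma mermin_Mexpr: "Mexpr (mermin V) = 4 * V"
  apply (simp add: Mexpr_def Mx_def mermin_def)
  apply (simp add: field_simps)
  done

lemma comb:
  assumes h: "\<forall>a\<in>bit. \<forall>b\<in>bit. \<forall>c\<in>bit. \<forall>x\<in>bit. \<forall>y\<in>bit. \<forall>z\<in>bit.
     complex_of_real (P a b c x y z) = (\<Sum>l<n. rr l * \<alpha> l a b x y * \<gamma> l c z)"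
  shows "complex_of_real (Mexpr P) = (\<Sum>l<n. rr l * ((\<gamma> l 0 1 - \<gamma> l 1 1) * (Fc \<alpha> l 0 0 - Fc \<alpha> l 1 1)
      + (\<gamma> l 0 0 - \<gamma> l 1 0) * (Fc \<alpha> l 0 1 + Fc \<alpha> l 1 0)))"
proof -
  have e: "\<And>a b c x y z. a \<in> bit \<Longrightarrow> b \<in> bit \<Longrightarrow> c \<in> bit \<Longrightarrow> x \<in> bit \<Longrightarrow> y \<in> bit \<Longrightarrow> z \<in> bit \<Longrightarrow>
     complex_of_real (P a b c x y z) = (\<Sum>l<n. rr l * \<alpha> l a b x y * \<gamma> l c z)"
    using h by blast
  show ?thesis
    apply (simp only: Mexpr_def Mx_def of_real_add of_real_diff)
    apply (simp only: e insert_iff singleton_iff simp_thms)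
    apply (simp only: sum_subtractf[symmetric] sum.distrib[symmetric])
    apply (rule sum.cong[OF refl])
    apply (simp add: Fc_def algebra_simps)
    done
qed

lemma mtrace_add_mult:
  assumes "A \<in> carrier_mat d d" "B \<in> carrier_mat d d" "C \<in> carrier_mat d d"
  shows "mtrace (A * C) + mtrace (B * C) = mtrace ((A + B) * C)"
proof -
  have AB: "A + B \<in> carrier_mat d d" using assms by simp
  show ?thesis
    unfolding mtrace_mult[OF assms(1,3)] mtrace_mult[OF assms(2,3)] mtrace_mult[OF AB assms(3)]
    unfolding sum.distrib[symmetric]
    using assms by (intro sum.cong refl) (simp add: ring_distribs)
qed

lemma gamma_props:
  assumes N0: "psd d N0" and N1: "psd d N1" and NN: "N0 + N1 = 1\<^sub>m d" and r: "density d \<rho>"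
  shows "\<exists>g. mtrace (N0 * \<rho>) - mtrace (N1 * \<rho>) = complex_of_real g \<and> \<bar>g\<bar> \<le> 1"
proof -
  have c: "N0 \<in> carrier_mat d d" "N1 \<in> carrier_mat d d" "\<rho> \<in> carrier_mat d d"
    using N0 N1 r by (auto simp: psd_def density_def)
  have rp: "psd d \<rho>" "mtrace \<rho> = 1" using r by (auto simp: density_def)
  have t0: "mtrace (N0 * \<rho>) = Tr2 d (\<lambda>i j. N0 $$ (i,j)) (\<lambda>i j. \<rho> $$ (i,j))"
    using c by (simp add: mtrace_mult Tr2_def)
  have t1: "mtrace (N1 * \<rho>) = Tr2 d (\<lambda>i j. N1 $$ (i,j)) (\<lambda>i j. \<rho> $$ (i,j))"
    using c by (simp add: mtrace_mult Tr2_def)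
  have p0: "Im (mtrace (N0 * \<rho>)) = 0" "Re (mtrace (N0 * \<rho>)) \<ge> 0"
    unfolding t0 using trace_pos[OF psd_psdf[OF N0] psd_psdf[OF rp(1)]] by auto
  have p1: "Im (mtrace (N1 * \<rho>)) = 0" "Re (mtrace (N1 * \<rho>)) \<ge> 0"
    unfolding t1 using trace_pos[OF psd_psdf[OF N1] psd_psdf[OF rp(1)]] by auto
  have "mtrace (N0 * \<rho>) + mtrace (N1 * \<rho>) = mtrace ((N0 + N1) * \<rho>)"
    by (rule mtrace_add_mult[OF c])
  also have "\<dots> = 1" unfolding NN using c(3) rp(2) by simp
  finally have s: "mtrace (N0 * \<rho>) + mtrace (N1 * \<rho>) = 1" .
  then have sr: "Re (mtrace (N0 * \<rho>)) + Re (mtrace (N1 * \<rho>)) = 1"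
    by (metis one_complex.simps(1) plus_complex.simps(1))
  show ?thesis
    apply (rule exI[of _ "Re (mtrace (N0 * \<rho>)) - Re (mtrace (N1 * \<rho>))"])
    using p0 p1 sr by (auto simp: complex_eq_iff)
qed

lemma trace4: assumes "density 4 R"
  shows "Re (R $$ (0,0)) + Re (R $$ (1,1)) + Re (R $$ (2,2)) + Re (R $$ (3,3)) = 1"
proof -
  have "R \<in> carrier_mat 4 4" "mtrace R = 1" using assms by (auto simp: density_def psd_def)
  then have "R $$ (0,0) + R $$ (1,1) + R $$ (2,2) + R $$ (3,3) = 1" by (simp add: mtrace_def sum4)
  then show ?thesis by (metis one_complex.simps(1) plus_complex.simps(1))
qed

lemma trace2: assumes "density 2 R"
  shows "Re (R $$ (0,0)) + Re (R $$ (1,1)) = 1"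
proof -
  have "R \<in> carrier_mat 2 2" "mtrace R = 1" using assms by (auto simp: density_def psd_def)
  then have "R $$ (0,0) + R $$ (1,1) = 1" by (simp add: mtrace_def sum2)
  then show ?thesis by (metis one_complex.simps(1) plus_complex.simps(1))
qed

lemma El_bound_sep:
  assumes R: "density 4 R" and g0: "\<gamma>0 = complex_of_real g0" "\<bar>g0\<bar> \<le> 1"
    and g1: "\<gamma>1 = complex_of_real g1" "\<bar>g1\<bar> \<le> 1"
  shows "Re (\<gamma>1 * (t3 R 0 0 - t3 R 1 1) + \<gamma>0 * (t3 R 0 1 + t3 R 1 0)) \<le> 2 * sqrt 2"
proof -
  have p: "psdf 4 (\<lambda>i j. R $$ (i,j))" using R by (intro psd_psdf) (simp add: density_def)
  have "\<gamma>1 * (t3 R 0 0 - t3 R 1 1) + \<gamma>0 * (t3 R 0 1 + t3 R 1 0) =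
     complex_of_real g1 * (2 * (R $$ (0,3) + R $$ (3,0))) + complex_of_real g0 * (2 * \<i> * (R $$ (0,3) - R $$ (3,0)))"
    unfolding g0 g1 t3_00 t3_11 t3_01 t3_10 by (simp add: algebra_simps)
  then show ?thesis using bound4[OF p _ g0(2) g1(2)] trace4[OF R] by simp
qed

lemma El_bound_lhs:
  assumes A: "density 2 RA" and B: "density 2 RB" and g0: "\<gamma>0 = complex_of_real g0" "\<bar>g0\<bar> \<le> 1"
    and g1: "\<gamma>1 = complex_of_real g1" "\<bar>g1\<bar> \<le> 1"
  shows "Re (\<gamma>1 * ((betaA RA 0 0 - betaA RA 1 0) * (betaB RB 0 0 - betaB RB 1 0)
                  - (betaA RA 0 1 - betaA RA 1 1) * (betaB RB 0 1 - betaB RB 1 1))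
           + \<gamma>0 * ((betaA RA 0 0 - betaA RA 1 0) * (betaB RB 0 1 - betaB RB 1 1)
                  + (betaA RA 0 1 - betaA RA 1 1) * (betaB RB 0 0 - betaB RB 1 0))) \<le> 2 * sqrt 2"
proof -
  have cA: "RA \<in> carrier_mat 2 2" and cB: "RB \<in> carrier_mat 2 2" using A B by (auto simp: density_def psd_def)
  have pA: "psdf 2 (\<lambda>i j. RA $$ (i,j))" using A by (intro psd_psdf) (simp add: density_def)
  have pB: "psdf 2 (\<lambda>i j. RB $$ (i,j))" using B by (intro psd_psdf) (simp add: density_def)
  show ?thesis
    unfolding betaA0[OF cA] betaA1[OF cA] betaB0[OF cB] betaB1[OF cB] g0 g1
    using bound2[OF pA _ pB _ g0(2) g1(2)] trace2[OF A] trace2[OF B] by simp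
qed



lemma contra: assumes "V > 1 / sqrt 2" "4 * V \<le> 2 * sqrt 2" shows False
proof -
  have s: "sqrt 2 > 0" by simp
  have a: "V * sqrt 2 > 1" using assms(1) s by (simp add: field_simps)
  have "(4 * V) * sqrt 2 \<le> (2 * sqrt 2) * sqrt 2" using assms(2) s by (simp add: mult_right_mono)
  moreover have "(2 * sqrt 2) * sqrt 2 = 4" by simp
  moreover have "(4 * V) * sqrt 2 = 4 * (V * sqrt 2)" by simp
  ultimately show False using a by linarith
qed

lemma final_sum:
  assumes r0: "\<forall>l<n. r l \<ge> 0" and r1: "(\<Sum>l<n. r l) = 1"
    and El: "\<And>l. l < n \<Longrightarrow> Re (E l) \<le> 2 * sqrt 2"
    and cm: "complex_of_real M = (\<Sum>l<n. complex_of_real (r l) * E l)"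
  shows "M \<le> 2 * sqrt 2"
proof -
  have "M = Re (complex_of_real M)" by simp
  also have "\<dots> = (\<Sum>l<n. r l * Re (E l))" unfolding cm by (simp add: Re_sum)
  also have "\<dots> \<le> (\<Sum>l<n. r l * (2 * sqrt 2))"
    by (intro sum_mono mult_left_mono) (use El r0 in auto)
  also have "\<dots> = 2 * sqrt 2" using r1 by (simp add: sum_distrib_right[symmetric])
  finally show ?thesis .
qed

lemma no_sep: assumes V: "V > 1 / sqrt 2" shows "\<not> AB_C_separable_model (mermin V)"
proof
  assume "AB_C_separable_model (mermin V)"
  then obtain d n :: nat and r :: "nat \<Rightarrow> real" and \<rho>AB \<rho>C :: "nat \<Rightarrow> complex mat"
      and N :: "nat \<Rightarrow> nat \<Rightarrow> complex mat" where
    r0: "\<forall>l<n. r l \<ge> 0" and r1: "(\<Sum>l<n. r l) = 1"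
    and dens: "\<forall>l<n. density 4 (\<rho>AB l) \<and> density d (\<rho>C l)"
    and NN: "\<forall>z\<in>bit. psd d (N 0 z) \<and> psd d (N 1 z) \<and> N 0 z + N 1 z = 1\<^sub>m d"
    and eq: "\<forall>a\<in>bit. \<forall>b\<in>bit. \<forall>c\<in>bit. \<forall>x\<in>bit. \<forall>y\<in>bit. \<forall>z\<in>bit.
          complex_of_real (mermin V a b c x y z) =
            mtrace (kron (kron (MA a x) (MB b y)) (N c z) *
              msum n (4 * d) (\<lambda>l. complex_of_real (r l) \<cdot>\<^sub>m kron (\<rho>AB l) (\<rho>C l)))"
    unfolding AB_C_separable_model_def Let_def by blast
  have Nc: "N c z \<in> carrier_mat d d" if "c \<in> bit" "z \<in> bit" for c z
    using NN that by (auto simp: psd_def)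
  have Rc: "\<forall>l<n. \<rho>AB l \<in> carrier_mat 4 4" "\<forall>l<n. \<rho>C l \<in> carrier_mat d d"
    using dens by (auto simp: density_def psd_def)
  have K: "kron (MA a x) (MB b y) \<in> carrier_mat 4 4" for a b x y
    using kron_carrier[OF MA_carrier MB_carrier] by simp
  define \<gamma> where "\<gamma> l c z = mtrace (N c z * \<rho>C l)" for l c z
  define \<alpha> where "\<alpha> l a b x y = alpha (\<rho>AB l) a b x y" for l a b x y
  have eq2: "\<forall>a\<in>bit. \<forall>b\<in>bit. \<forall>c\<in>bit. \<forall>x\<in>bit. \<forall>y\<in>bit. \<forall>z\<in>bit.
     complex_of_real (mermin V a b c x y z) = (\<Sum>l<n. complex_of_real (r l) * \<alpha> l a b x y * \<gamma> l c z)"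
  proof (intro ballI)
    fix a b c x y z assume h: "a \<in> bit" "b \<in> bit" "c \<in> bit" "x \<in> bit" "y \<in> bit" "z \<in> bit"
    have "complex_of_real (mermin V a b c x y z) =
            mtrace (kron (kron (MA a x) (MB b y)) (N c z) *
              msum n (4 * d) (\<lambda>l. complex_of_real (r l) \<cdot>\<^sub>m kron (\<rho>AB l) (\<rho>C l)))"
      using eq h by blast
    also have "\<dots> = (\<Sum>l<n. complex_of_real (r l) * mtrace (kron (MA a x) (MB b y) * \<rho>AB l) * mtrace (N c z * \<rho>C l))"
      by (rule trace_kron_msum[OF K Nc[OF h(3) h(6)] Rc])
    finally show "complex_of_real (mermin V a b c x y z) = (\<Sum>l<n. complex_of_real (r l) * \<alpha> l a b x y * \<gamma> l c z)"
      by (simp add: \<alpha>_def \<gamma>_def alpha_def)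
  qed
  have cm: "complex_of_real (Mexpr (mermin V)) = (\<Sum>l<n. complex_of_real (r l) *
      ((\<gamma> l 0 1 - \<gamma> l 1 1) * (Fc \<alpha> l 0 0 - Fc \<alpha> l 1 1) + (\<gamma> l 0 0 - \<gamma> l 1 0) * (Fc \<alpha> l 0 1 + Fc \<alpha> l 1 0)))"
    by (rule comb[OF eq2])
  have El: "Re ((\<gamma> l 0 1 - \<gamma> l 1 1) * (Fc \<alpha> l 0 0 - Fc \<alpha> l 1 1) + (\<gamma> l 0 0 - \<gamma> l 1 0) * (Fc \<alpha> l 0 1 + Fc \<alpha> l 1 0))
     \<le> 2 * sqrt 2" if l: "l < n" for l
  proof -
    have Fc: "Fc \<alpha> l x y = t3 (\<rho>AB l) x y" for x y
      using F_t3[of "\<rho>AB l" x y] Rc l by (simp add: Fc_def \<alpha>_def)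
    obtain g0 where g0: "\<gamma> l 0 0 - \<gamma> l 1 0 = complex_of_real g0" "\<bar>g0\<bar> \<le> 1"
      using gamma_props[of d "N 0 0" "N 1 0" "\<rho>C l"] NN dens l by (auto simp: \<gamma>_def)
    obtain g1 where g1: "\<gamma> l 0 1 - \<gamma> l 1 1 = complex_of_real g1" "\<bar>g1\<bar> \<le> 1"
      using gamma_props[of d "N 0 1" "N 1 1" "\<rho>C l"] NN dens l by (auto simp: \<gamma>_def)
    show ?thesis unfolding Fc using El_bound_sep[OF _ g0 g1] dens l by auto
  qed
  have "Mexpr (mermin V) \<le> 2 * sqrt 2" by (rule final_sum[OF r0 r1 El cm])
  then show False using contra[OF V] by (simp add: mermin_Mexpr)
qed

lemma no_lhs: assumes V: "V > 1 / sqrt 2" shows "\<not> fully_LHS_LHV (mermin V)"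
proof
  assume "fully_LHS_LHV (mermin V)"
  then obtain n :: nat and q :: "nat \<Rightarrow> real" and \<rho>A \<rho>B :: "nat \<Rightarrow> complex mat"
      and Pc :: "nat \<Rightarrow> nat \<Rightarrow> nat \<Rightarrow> real" where
    q0: "\<forall>l<n. q l \<ge> 0" and q1: "(\<Sum>l<n. q l) = 1"
    and dens: "\<forall>l<n. density 2 (\<rho>A l) \<and> density 2 (\<rho>B l)"
    and Pc: "\<forall>l<n. \<forall>z\<in>bit. Pc l 0 z \<ge> 0 \<and> Pc l 1 z \<ge> 0 \<and> Pc l 0 z + Pc l 1 z = 1"
    and eq: "\<forall>a\<in>bit. \<forall>b\<in>bit. \<forall>c\<in>bit. \<forall>x\<in>bit. \<forall>y\<in>bit. \<forall>z\<in>bit.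
          complex_of_real (mermin V a b c x y z) =
            (\<Sum>l<n. complex_of_real (q l) * mtrace (MA a x * \<rho>A l)
                     * mtrace (MB b y * \<rho>B l) * complex_of_real (Pc l c z))"
    unfolding fully_LHS_LHV_def by blast
  define \<gamma> where "\<gamma> l c z = complex_of_real (Pc l c z)" for l c z
  define \<alpha> where "\<alpha> l a b x y = betaA (\<rho>A l) a x * betaB (\<rho>B l) b y" for l a b x y
  have eq2: "\<forall>a\<in>bit. \<forall>b\<in>bit. \<forall>c\<in>bit. \<forall>x\<in>bit. \<forall>y\<in>bit. \<forall>z\<in>bit.
     complex_of_real (mermin V a b c x y z) = (\<Sum>l<n. complex_of_real (q l) * \<alpha> l a b x y * \<gamma> l c z)"
  proof (intro ballI)
    fix a b c x y z assume h: "a \<in> bit" "b \<in> bit" "c \<in> bit" "x \<in> bit" "y \<in> bit" "z \<in> bit"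
    have "complex_of_real (mermin V a b c x y z) =
            (\<Sum>l<n. complex_of_real (q l) * mtrace (MA a x * \<rho>A l)
                     * mtrace (MB b y * \<rho>B l) * complex_of_real (Pc l c z))"
      using eq h by blast
    then show "complex_of_real (mermin V a b c x y z) = (\<Sum>l<n. complex_of_real (q l) * \<alpha> l a b x y * \<gamma> l c z)"
      by (simp add: \<alpha>_def \<gamma>_def betaA_def betaB_def mult.assoc)
  qed
  have cm: "complex_of_real (Mexpr (mermin V)) = (\<Sum>l<n. complex_of_real (q l) *
      ((\<gamma> l 0 1 - \<gamma> l 1 1) * (Fc \<alpha> l 0 0 - Fc \<alpha> l 1 1) + (\<gamma> l 0 0 - \<gamma> l 1 0) * (Fc \<alpha> l 0 1 + Fc \<alpha> l 1 0)))"
    by (rule comb[OF eq2])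
  have El: "Re ((\<gamma> l 0 1 - \<gamma> l 1 1) * (Fc \<alpha> l 0 0 - Fc \<alpha> l 1 1) + (\<gamma> l 0 0 - \<gamma> l 1 0) * (Fc \<alpha> l 0 1 + Fc \<alpha> l 1 0))
     \<le> 2 * sqrt 2" if l: "l < n" for l
  proof -
    have Fc: "Fc \<alpha> l x y = (betaA (\<rho>A l) 0 x - betaA (\<rho>A l) 1 x) * (betaB (\<rho>B l) 0 y - betaB (\<rho>B l) 1 y)" for x y
      by (simp add: Fc_def \<alpha>_def algebra_simps)
    have p0: "Pc l 0 0 \<ge> 0" "Pc l 1 0 \<ge> 0" "Pc l 0 0 + Pc l 1 0 = 1"
      and p1: "Pc l 0 1 \<ge> 0" "Pc l 1 1 \<ge> 0" "Pc l 0 1 + Pc l 1 1 = 1" using Pc l by auto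
    have g0: "\<gamma> l 0 0 - \<gamma> l 1 0 = complex_of_real (Pc l 0 0 - Pc l 1 0)" "\<bar>Pc l 0 0 - Pc l 1 0\<bar> \<le> 1"
      using p0 by (auto simp: \<gamma>_def)
    have g1: "\<gamma> l 0 1 - \<gamma> l 1 1 = complex_of_real (Pc l 0 1 - Pc l 1 1)" "\<bar>Pc l 0 1 - Pc l 1 1\<bar> \<le> 1"
      using p1 by (auto simp: \<gamma>_def)
    show ?thesis unfolding Fc using El_bound_lhs[OF _ _ g0 g1] dens l by auto
  qed
  have "Mexpr (mermin V) \<le> 2 * sqrt 2" by (rule final_sum[OF q0 q1 El cm])
  then show False using contra[OF V] by (simp add: mermin_Mexpr)
qed



definition Rm :: "real \<Rightarrow> real \<Rightarrow> complex \<Rightarrow> complex mat" where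
  "Rm d0 d1 zz = mat 4 4 (\<lambda>(i,j). if i = j then (if i = 0 \<or> i = 3 then complex_of_real d0 else complex_of_real d1)
      else if i = 3 \<and> j = 0 then zz else if i = 0 \<and> j = 3 then cnj zz else 0)"

definition Tz :: "nat \<Rightarrow> nat \<Rightarrow> complex \<Rightarrow> complex" where
  "Tz x y zz = (if x = y then (if x = 0 then zz + cnj zz else - (zz + cnj zz)) else \<i> * (cnj zz - zz))"

lemma Rm_carrier: "Rm d0 d1 zz \<in> carrier_mat 4 4" by (simp add: Rm_def)

lemma bit_cases: "a \<in> bit \<Longrightarrow> a = 0 \<or> a = 1" by auto

lemma alpha_Rm:
  assumes "a \<in> bit" "b \<in> bit" "x \<in> bit" "y \<in> bit"
  shows "alpha (Rm d0 d1 zz) a b x y = (2 * complex_of_real d0 + 2 * complex_of_real d1 + (-1)^(a+b) * Tz x y zz) / 4"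
proof -
  have e: "alpha (Rm d0 d1 zz) a b x y = (\<Sum>i<4. \<Sum>j<4.
     ((if i div 2 = j div 2 then 1 else 0) + (-1)^a * oent x (i div 2) (j div 2)) / 2 *
     (((if i mod 2 = j mod 2 then 1 else 0) + (-1)^b * oent y (i mod 2) (j mod 2)) / 2) * Rm d0 d1 zz $$ (j,i))"
    by (rule alpha_formula[OF Rm_carrier])
  have r: "(\<Sum>i<4. \<Sum>j<4. f i j * Rm d0 d1 zz $$ (j,i)) =
     f 0 0 * d0 + f 1 1 * d1 + f 2 2 * d1 + f 3 3 * d0 + f 0 3 * zz + f 3 0 * cnj zz" for f
    by (simp add: sum4 Rm_def)
  show ?thesis
    using bit_cases[OF assms(1)] bit_cases[OF assms(2)] bit_cases[OF assms(3)] bit_cases[OF assms(4)]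
    unfolding e r
    by (elim disjE) (simp_all add: oent_def Tz_def field_simps)
qed

definition c0f :: "nat \<Rightarrow> real" where "c0f l = (if l mod 2 = 0 then 1 else -1)"
definition c1f :: "nat \<Rightarrow> real" where "c1f l = (if l div 2 = 0 then 1 else -1)"
definition bz :: "nat \<Rightarrow> nat \<Rightarrow> nat" where "bz z l = (if z = 0 then l mod 2 else l div 2)"
definition zl :: "real \<Rightarrow> nat \<Rightarrow> complex" where
  "zl V l = complex_of_real V * (complex_of_real (c1f l) + \<i> * complex_of_real (c0f l)) / 2"
definition tau :: "real \<Rightarrow> nat \<Rightarrow> nat \<Rightarrow> nat \<Rightarrow> real" where
  "tau V l x y = (if x = y then (if x = 0 then V * c1f l else - (V * c1f l)) else V * c0f l)"
definition Cm :: "nat \<Rightarrow> complex mat" where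
  "Cm l = mat 4 4 (\<lambda>(i,j). if i = l \<and> j = l then 1 else 0)"
definition Nm :: "nat \<Rightarrow> nat \<Rightarrow> complex mat" where
  "Nm c z = mat 4 4 (\<lambda>(i,j). if i = j \<and> bz z i = c then 1 else 0)"

lemma Tz_zl: "Tz x y (zl V l) = complex_of_real (tau V l x y)"
  by (simp add: Tz_def zl_def tau_def complex_eq_iff)

lemma l4_cases: "l < (4::nat) \<Longrightarrow> l = 0 \<or> l = 1 \<or> l = 2 \<or> l = 3" by auto

lemma trace_NC: assumes "l < 4"
  shows "mtrace (Nm c z * Cm l) = (if bz z l = c then 1 else 0)"
proof -
  have "mtrace (Nm c z * Cm l) = (\<Sum>i<4. \<Sum>j<4. Nm c z $$ (i,j) * Cm l $$ (j,i))"
    by (rule mtrace_mult) (simp_all add: Nm_def Cm_def)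
  then show ?thesis using l4_cases[OF assms]
    by (elim disjE) (simp_all add: sum4 Nm_def Cm_def)
qed

lemma prob_eq:
  assumes "a \<in> bit" "b \<in> bit" "c \<in> bit" "x \<in> bit" "y \<in> bit" "z \<in> bit"
  shows "mermin V a b c x y z = (\<Sum>l<4. 1/4 * ((1 + (-1)^(a+b) * tau V l x y) / 4) * (if bz z l = c then 1 else 0))"
  using bit_cases[OF assms(1)] bit_cases[OF assms(2)] bit_cases[OF assms(3)]
    bit_cases[OF assms(4)] bit_cases[OF assms(5)] bit_cases[OF assms(6)]
  by (elim disjE) (simp_all add: sum4 mermin_def tau_def c0f_def c1f_def bz_def field_simps)



lemma psdf_cong: "(\<And>i j. i < n \<Longrightarrow> j < n \<Longrightarrow> A i j = B i j) \<Longrightarrow> psdf n A \<Longrightarrow> psdf n B"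
  unfolding psdf_def using Qf_cong[of n _ _ A B] by metis

lemma cdz: "cnj z * complex_of_real d * z = complex_of_real (d * (cmod z)^2)"
proof -
  have "cnj z * z = complex_of_real ((cmod z)^2)"
    using complex_norm_square[of z, symmetric] by (simp only: mult.commute)
  then show ?thesis by (simp add: algebra_simps)
qed

lemma psdf_diagfn:
  assumes "\<And>i. i < n \<Longrightarrow> f i \<ge> 0"
  shows "psdf n (\<lambda>i j. if i = j then complex_of_real (f i) else 0)"
  unfolding psdf_def
proof
  fix v :: "nat \<Rightarrow> complex"
  have "Qf n (\<lambda>i j. if i = j then complex_of_real (f i) else 0) v = (\<Sum>i<n. cnj (v i) * complex_of_real (f i) * v i)"
    unfolding Qf_def by (simp add: if0_mult)
  also have "\<dots> = complex_of_real (\<Sum>i<n. f i * (cmod (v i))^2)" by (simp add: cdz)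
  finally have q: "Qf n (\<lambda>i j. if i = j then complex_of_real (f i) else 0) v = complex_of_real (\<Sum>i<n. f i * (cmod (v i))^2)" .
  have "(\<Sum>i<n. f i * (cmod (v i))^2) \<ge> 0" using assms by (intro sum_nonneg) auto
  then show "Im (Qf n (\<lambda>i j. if i = j then complex_of_real (f i) else 0) v) = 0 \<and>
     0 \<le> Re (Qf n (\<lambda>i j. if i = j then complex_of_real (f i) else 0) v)" unfolding q by simp
qed

lemma psdf_Rm:
  assumes d0: "d0 \<ge> 0" and d1: "d1 \<ge> 0" and z: "cmod zz \<le> d0"
  shows "psdf 4 (\<lambda>i j. Rm d0 d1 zz $$ (i,j))"
  unfolding psdf_def
proof
  fix v :: "nat \<Rightarrow> complex"
  define u where "u = cnj (v 3) * zz * v 0"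
  have q: "Qf 4 (\<lambda>i j. Rm d0 d1 zz $$ (i,j)) v =
    cnj (v 0) * complex_of_real d0 * v 0 + cnj (v 1) * complex_of_real d1 * v 1
    + cnj (v 2) * complex_of_real d1 * v 2 + cnj (v 3) * complex_of_real d0 * v 3
    + (cnj (v 0) * cnj zz * v 3 + cnj (v 3) * zz * v 0)"
    unfolding Qf_def by (simp add: sum4 Rm_def)
  have cu: "cnj (v 0) * cnj zz * v 3 + cnj (v 3) * zz * v 0 = u + cnj u"
    by (simp add: u_def algebra_simps)
  let ?a = "cmod (v 0)" and ?b = "cmod (v 3)"
  have q2: "Qf 4 (\<lambda>i j. Rm d0 d1 zz $$ (i,j)) v = complex_of_real (d0 * ?a^2 + d1 * (cmod (v 1))^2
     + d1 * (cmod (v 2))^2 + d0 * ?b^2) + (u + cnj u)"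
    unfolding q cu cdz by simp
  have cm: "cmod u = ?b * cmod zz * ?a" by (simp add: u_def norm_mult)
  have ru: "Re u \<ge> - cmod u" using abs_Re_le_cmod[of u] by linarith
  have m1: "cmod zz * (?a * ?b) \<le> d0 * (?a * ?b)" using z by (intro mult_right_mono) auto
  have m2: "0 \<le> d0 * (?a - ?b)^2" using d0 by simp
  have m3: "d0 * (?a - ?b)^2 = d0 * ?a^2 + d0 * ?b^2 - 2 * (d0 * (?a * ?b))"
    by (simp add: power2_eq_square algebra_simps)
  have m4: "0 \<le> d1 * (cmod (v 1))^2 + d1 * (cmod (v 2))^2" using d1 by simp
  have "Re (Qf 4 (\<lambda>i j. Rm d0 d1 zz $$ (i,j)) v) = d0 * ?a^2 + d1 * (cmod (v 1))^2
     + d1 * (cmod (v 2))^2 + d0 * ?b^2 + 2 * Re u" unfolding q2 by simp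
  moreover have "cmod u = cmod zz * (?a * ?b)" unfolding cm by (simp add: algebra_simps)
  ultimately have "Re (Qf 4 (\<lambda>i j. Rm d0 d1 zz $$ (i,j)) v) \<ge> 0"
    using ru m1 m2 m3 m4 by linarith
  moreover have "Im (Qf 4 (\<lambda>i j. Rm d0 d1 zz $$ (i,j)) v) = 0" unfolding q2 by simp
  ultimately show "Im (Qf 4 (\<lambda>i j. Rm d0 d1 zz $$ (i,j)) v) = 0 \<and> 0 \<le> Re (Qf 4 (\<lambda>i j. Rm d0 d1 zz $$ (i,j)) v)"
    by simp
qed

lemma density_Rm:
  assumes "d0 \<ge> 0" "d1 \<ge> 0" "cmod zz \<le> d0" "2 * d0 + 2 * d1 = 1"
  shows "density 4 (Rm d0 d1 zz)"
proof -
  have "psd 4 (Rm d0 d1 zz)" by (rule psdf_psd[OF Rm_carrier psdf_Rm[OF assms(1-3)]])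
  moreover have "mtrace (Rm d0 d1 zz) = complex_of_real (2 * d0 + 2 * d1)"
    by (simp add: mtrace_def Rm_def sum4)
  ultimately show ?thesis using assms(4) by (simp add: density_def)
qed

lemma density_Cm: assumes "l < 4" shows "density 4 (Cm l)"
proof -
  have "psdf 4 (\<lambda>i j. if i = j then complex_of_real (if i = l then 1 else 0) else 0)"
    by (rule psdf_diagfn) simp
  then have "psdf 4 (\<lambda>i j. Cm l $$ (i,j))" by (rule psdf_cong[rotated]) (auto simp: Cm_def)
  then have "psd 4 (Cm l)" by (intro psdf_psd) (simp_all add: Cm_def)
  moreover have "mtrace (Cm l) = 1" using l4_cases[OF assms]
    by (elim disjE) (simp_all add: mtrace_def Cm_def sum4)
  ultimately show ?thesis by (simp add: density_def)
qed

lemma psd_Nm: "psd 4 (Nm c z)"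
proof -
  have "psdf 4 (\<lambda>i j. if i = j then complex_of_real (if bz z i = c then 1 else 0) else 0)"
    by (rule psdf_diagfn) simp
  then have "psdf 4 (\<lambda>i j. Nm c z $$ (i,j))" by (rule psdf_cong[rotated]) (auto simp: Nm_def)
  then show "psd 4 (Nm c z)" by (intro psdf_psd) (simp_all add: Nm_def)
qed

lemma Nm_sum: "Nm 0 z + Nm 1 z = 1\<^sub>m 4"
proof (rule eq_matI)
  fix i j assume ij: "i < dim_row (1\<^sub>m 4 :: complex mat)" "j < dim_col (1\<^sub>m 4 :: complex mat)"
  have "bz z i = 0 \<or> bz z i = 1" using ij by (auto simp: bz_def)
  then show "(Nm 0 z + Nm 1 z) $$ (i, j) = 1\<^sub>m 4 $$ (i, j)" using ij by (auto simp: Nm_def)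
qed (simp_all add: Nm_def)



lemma sep_model:
  assumes V0: "0 \<le> V" and V1: "V \<le> 1 / sqrt 2"
  shows "AB_C_separable_model (mermin V)"
proof -
  define p where "p = sqrt 2 * V"
  define d0 where "d0 = (1 + p) / 4"
  define d1 where "d1 = (1 - p) / 4"
  have p0: "p \<ge> 0" using V0 by (simp add: p_def)
  have p1: "p \<le> 1" using V1 by (simp add: p_def field_simps)
  have dd: "2 * d0 + 2 * d1 = 1" by (simp add: d0_def d1_def field_simps)
  have d0p: "d0 \<ge> 0" "d1 \<ge> 0" using p0 p1 by (simp_all add: d0_def d1_def)
  have zb: "cmod (zl V l) \<le> d0" for l
  proof -
    have c: "\<bar>c0f l\<bar> \<le> 1" "\<bar>c1f l\<bar> \<le> 1" by (simp_all add: c0f_def c1f_def)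
    have "cmod (zl V l) = V * cmod (complex_of_real (c1f l) + \<i> * complex_of_real (c0f l)) / 2"
      using V0 by (simp add: zl_def norm_mult norm_divide)
    also have "\<dots> \<le> V * sqrt 2 / 2" using cmod_w_le[OF c] V0 by (simp add: mult_left_mono)
    also have "\<dots> = p / 2" by (simp add: p_def)
    also have "\<dots> \<le> d0" using p1 by (simp add: d0_def)
    finally show ?thesis .
  qed
  define RR where "RR l = Rm d0 d1 (zl V l)" for l
  have K: "kron (MA a x) (MB b y) \<in> carrier_mat 4 4" for a b x y
    using kron_carrier[OF MA_carrier MB_carrier] by simp
  have Nc: "Nm c z \<in> carrier_mat 4 4" for c z by (simp add: Nm_def)
  have Rc: "\<forall>l<4. RR l \<in> carrier_mat 4 4" "\<forall>l<(4::nat). Cm l \<in> carrier_mat 4 4"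
    by (simp_all add: RR_def Rm_carrier Cm_def)
  have dd': "2 * complex_of_real d0 + 2 * complex_of_real d1 = 1"
    using arg_cong[OF dd, of complex_of_real] by simp
  have eqs: "complex_of_real (mermin V a b c x y z) =
     mtrace (kron (kron (MA a x) (MB b y)) (Nm c z) *
       msum 4 (4 * 4) (\<lambda>l. complex_of_real (1/4) \<cdot>\<^sub>m kron (RR l) (Cm l)))"
    if h: "a \<in> bit" "b \<in> bit" "c \<in> bit" "x \<in> bit" "y \<in> bit" "z \<in> bit" for a b c x y z
  proof -
    have "mtrace (kron (kron (MA a x) (MB b y)) (Nm c z) *
       msum 4 (4 * 4) (\<lambda>l. complex_of_real (1/4) \<cdot>\<^sub>m kron (RR l) (Cm l)))
      = (\<Sum>l<4. complex_of_real (1/4) * mtrace (kron (MA a x) (MB b y) * RR l) * mtrace (Nm c z * Cm l))"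
      by (rule trace_kron_msum[OF K Nc Rc])
    also have "\<dots> = (\<Sum>l<4. complex_of_real (1/4 * ((1 + (-1)^(a+b) * tau V l x y) / 4) * (if bz z l = c then 1 else 0)))"
    proof (rule sum.cong[OF refl])
      fix l assume "l \<in> {..<4::nat}"
      then have l: "l < 4" by simp
      have mt: "mtrace (kron (MA a x) (MB b y) * RR l) = (1 + (-1)^(a+b) * complex_of_real (tau V l x y)) / 4"
        using alpha_Rm[OF h(1,2,4,5), of d0 d1 "zl V l"] dd' unfolding alpha_def RR_def Tz_zl by simp
      then show "complex_of_real (1/4) * mtrace (kron (MA a x) (MB b y) * RR l) * mtrace (Nm c z * Cm l) =
        complex_of_real (1/4 * ((1 + (-1)^(a+b) * tau V l x y) / 4) * (if bz z l = c then 1 else 0))"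
        unfolding trace_NC[OF l] mt by simp
    qed
    also have "\<dots> = complex_of_real (\<Sum>l<4. 1/4 * ((1 + (-1)^(a+b) * tau V l x y) / 4) * (if bz z l = c then 1 else 0))"
      by (simp only: of_real_sum)
    also have "\<dots> = complex_of_real (mermin V a b c x y z)" using prob_eq[OF h] by simp
    finally show ?thesis by simp
  qed
  show ?thesis
    unfolding AB_C_separable_model_def Let_def
    apply (rule exI[of _ 4], rule exI[of _ 4], rule exI[of _ "\<lambda>_. 1/4"], rule exI[of _ RR],
           rule exI[of _ Cm], rule exI[of _ Nm])
    using eqs density_Rm[OF d0p zb dd] density_Cm psd_Nm Nm_sum
    by (simp add: RR_def sum4)
qed

theorem proposition6:
  fixes V :: real
  assumes "0 < V" and "V \<le> 1"
  shows "tripartite_steering (mermin V) \<longleftrightarrow> V > 1 / sqrt 2"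
proof
  assume st: "tripartite_steering (mermin V)"
  show "V > 1 / sqrt 2"
  proof (rule ccontr)
    assume "\<not> V > 1 / sqrt 2"
    then have "AB_C_separable_model (mermin V)" using sep_model assms(1) by simp
    then show False using st by (simp add: tripartite_steering_def)
  qed
next
  assume "V > 1 / sqrt 2"
  then show "tripartite_steering (mermin V)"
    using no_sep no_lhs by (simp add: tripartite_steering_def)
qed

end
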